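(* Consider the differential equation \[ \frac{d}{dt}\left(\frac{\cos x}{1-\dot{x}}\right) = -\sin x, \qquad\text{equivalently}\qquad \frac{\cos x}{(1-\dot{x})^2}\,\ddot{x} - \frac{\sin x}{1-\dot{x}}\,\dot{x} = -\sin x, \] for a real function $x=x(t)$, with initial conditions $x(0)=a$, $\dot{x}(0)=b$, where $a,b\in\mathbb{R}$ satisfy \[ |a|<\pi/2,\qquad b\neq \tfrac12,\qquad b\neq 1,\qquad |a|+|b|>0 . \] Put $c=\dfrac{(2b-1)\cos^2 a}{(1-b)^2}$, $A=\sin 2a$ and $B=2b-1+\cos 2a$. Then the initial value problem has a smooth solution $x:\mathbb{R}\to\mathbb{R}$ given in explicit form. This solution satisfies \[ \tan x(t)=\frac{A\cos t+B\sin t}{2(1-b)+B\cos t-A\sin t} \] wherever the right-hand side is defined, and \[ \dot{x}(t)=\frac12+\frac{2(2b-1)\cos^2 a}{A^2+B^2+4(1-b)(B\cos t-A\sin t)+4(1-b)^2}. \] It satisfies the differential equation at every $t$ with $\cos x(t)\neq 0$ and $\dot{x}(t)\neq 1$. Moreover: 1. The solution $x$ is periodic if and only if $b<\tfrac12$. In that case its orbit in the phase plane (the $(x,\dot{x})$-plane) is a periodic orbit surrounding the origin, symmetric with respect to the $\dot{x}$-axis. 2. Suppose $b>\tfrac12$. Let $\{t_j\}_{j\in\mathbb{Z}}$ be the strictly increasing enumeration of the real roots of the trigonometric equation $B\cos t-A\sin t=2(b-1)$, indexed so that $t_0$ is the smallest positive root. Then: - for every $j\in\mathbb{Z}$, $x(t_j)$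 is an odd integer multiple of $\pi/2$ and $\dot{x}(t_j)=1$; - at each $t_j$, the differential equation and the energy relation \[ (\cos^2 x)\,\frac{2\dot{x}-1}{(1-\dot{x})^2}=c \] hold in the sense of the limit $t\to t_j$; - the orbit in the phase plane oscillates about the line $\dot{x}=1$ within the strip \[ \frac{\sqrt{1+c}}{\sqrt{1+c}+1}\le \dot{x}\le \frac{\sqrt{1+c}}{\sqrt{1+c}-1}, \] and it crosses the line $\dot{x}=1$ exactly at the times $t=t_j$, $j\in\mathbb{Z}$.
   Context: The phase plane is the $(x,\dot{x})$-plane. Points where $\cos x=0$ or $\dot{x}=1$ are singular points of the equation: there the coefficient of $\ddot{x}$ vanishes or becomes unbounded. The constant $c$ is the value of the "energy" $(\cos^2 x)(2\dot{x}-1)/(1-\dot{x})^2$ at $t=0$. This energy is conserved along solutions away from the singular points. *)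

theory Defs
  imports "HOL-Analysis.Analysis"
begin

definition smooth_real :: "(real \<Rightarrow> real) \<Rightarrow> bool" where
  "smooth_real f \<longleftrightarrow> (\<forall>n t. ((deriv ^^ n) f) differentiable (at t))"

definition periodic_real :: "(real \<Rightarrow> real) \<Rightarrow> bool" where
  "periodic_real f \<longleftrightarrow> (\<exists>T>0. \<forall>t. f (t + T) = f t)"

definition phase_orbit :: "(real \<Rightarrow> real) \<Rightarrow> (real \<times> real) set" where
  "phase_orbit f = (\<lambda>t. (f t, deriv f t)) ` UNIV"

definition ode_residual :: "(real \<Rightarrow> real) \<Rightarrow> real \<Rightarrow> real" where
  "ode_residual f t =
     cos (f t) / (1 - deriv f t)^2 * deriv (deriv f) t
     - sin (f t) / (1 - deriv f t) * deriv f t + sin (f t)"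

definition energy :: "(real \<Rightarrow> real) \<Rightarrow> real \<Rightarrow> real" where
  "energy f t = (cos (f t))^2 * (2 * deriv f t - 1) / (1 - deriv f t)^2"

end

theory Submission
  imports Defs
begin

locale L =
  fixes a b :: real
  assumes ha: "\<bar>a\<bar> < pi / 2" and hb1: "b \<noteq> 1 / 2" and hb2: "b \<noteq> 1"
    and hab: "\<bar>a\<bar> + \<bar>b\<bar> > 0"
begin

definition "A = sin (2 * a)"
definition "B = 2 * b - 1 + cos (2 * a)"
definition "K = 2 * (2 * b - 1) * (cos a)^2"
definition "E t = B * cos t - A * sin t"
definition "N t = A * cos t + B * sin t"
definition "M t = 2 * (1 - b) + B * cos t - A * sin t"
definition "D t = A^2 + B^2 + 4 * (1 - b) * (B * cos t - A * sin t) + 4 * (1 - b)^2"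
definition "g t = 1 / 2 + K / D t"

lemma cosa_pos: "cos a > 0"
  using ha by (intro cos_gt_zero_pi) auto

lemma K_ne: "K \<noteq> 0"
  using cosa_pos hb1 by (auto simp: K_def)

lemma RR: "A^2 + B^2 = 4 * (1 - b)^2 + 2 * K"
proof -
  have "sin a ^ 2 + cos a ^ 2 = 1" by simp
  then show ?thesis unfolding A_def B_def K_def sin_double cos_double
    by algebra
qed

lemma EN: "E t ^ 2 + N t ^ 2 = A^2 + B^2"
proof -
  have "sin t ^ 2 + cos t ^ 2 = 1" by simp
  then show ?thesis unfolding E_def N_def by algebra
qed

lemma ME: "M t = 2 * (1 - b) + E t" unfolding M_def E_def by simp

lemma DMN: "D t = M t ^ 2 + N t ^ 2"
proof -
  have "D t = A^2 + B^2 + 4 * (1 - b) * E t + 4 * (1 - b)^2" unfolding D_def E_def by simp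
  also have "\<dots> = E t ^ 2 + N t ^ 2 + 4 * (1 - b) * E t + 4 * (1 - b)^2" using EN by simp
  also have "\<dots> = M t ^ 2 + N t ^ 2" unfolding ME by (simp add: power2_eq_square algebra_simps)
  finally show ?thesis .
qed

lemma D_pos: "D t > 0"
proof -
  have "D t \<ge> 0" unfolding DMN by simp
  moreover have "D t \<noteq> 0"
  proof
    assume "D t = 0"
    then have "M t = 0" "N t = 0" unfolding DMN by (auto simp: sum_power2_eq_zero_iff)
    then have "E t = - 2 * (1 - b)" using ME[of t] by simp
    then have "K = 0" using EN[of t] \<open>N t = 0\<close> RR by algebra
    then show False using K_ne by simp
  qed
  ultimately show ?thesis by simp
qed

lemma gD: "g t * D t = M t * E t + N t ^ 2"
proof -
  have "g t * D t = D t / 2 + K" using D_pos[of t] by (simp add: g_def field_simps)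
  also have "\<dots> = M t * E t + N t ^ 2"
  proof -
    have "D t = A^2 + B^2 + 4 * (1 - b) * E t + 4 * (1 - b)^2" unfolding D_def E_def by simp
    then show ?thesis using RR EN[of t] unfolding ME by algebra
  qed
  finally show ?thesis .
qed

lemma D_minus_2K: "D t - 2 * K = 4 * (1 - b) * M t"
    using RR unfolding D_def M_def by (simp add: power2_eq_square algebra_simps)

lemma one_minus_g: "1 - g t = 2 * (1 - b) * M t / D t"
proof -
  have "D t - 2 * K = 4 * (1 - b) * M t" by (rule D_minus_2K)
  moreover have "1 - g t = (D t - 2 * K) / (2 * D t)" using D_pos[of t] by (simp add: g_def field_simps)
  ultimately show ?thesis using D_pos[of t] by (simp add: field_simps)
qed

lemma M0: "M 0 = 2 * (cos a)^2" unfolding M_def B_def cos_double_cos by simp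
lemma N0: "N 0 = A" unfolding N_def by simp
lemma D0: "D 0 = 4 * (cos a)^2"
proof -
  have "sin a ^ 2 + cos a ^ 2 = 1" by simp
  then show ?thesis unfolding DMN M0 N0 A_def sin_double
    by algebra
qed

lemma g0: "g 0 = b"
proof -
  have "cos a ^ 2 > 0" using cosa_pos by simp
  then show ?thesis unfolding g_def D0 K_def by (simp add: field_simps)
qed

lemma DERIV_N: "(N has_real_derivative E t) (at t)"
  unfolding N_def[abs_def] E_def by (auto intro!: derivative_eq_intros)
lemma DERIV_M: "(M has_real_derivative - N t) (at t)"
  unfolding M_def[abs_def] N_def by (auto intro!: derivative_eq_intros)
lemma DERIV_D: "(D has_real_derivative - 4 * (1 - b) * N t) (at t)"
  unfolding D_def[abs_def] N_def by (auto intro!: derivative_eq_intros simp: algebra_simps)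
lemma DERIV_g: "(g has_real_derivative 4 * (1 - b) * K * N t / (D t)^2) (at t)"
  unfolding g_def[abs_def] using D_pos[of t]
  by (auto intro!: derivative_eq_intros DERIV_D simp: power2_eq_square field_simps)

lemma cont_D: "continuous_on S D"
  unfolding D_def[abs_def] by (auto intro!: continuous_intros)

lemma D_ne: "D t \<noteq> 0" using D_pos[of t] by simp

lemma cont_g: "continuous_on S g"
  unfolding g_def[abs_def] by (auto intro!: continuous_intros cont_D D_ne)

end

context L begin

definition "G t = integral {0..t} g - integral {t..0} g"
definition "x t = a + G t"

lemma G_eq:
  assumes "lo \<le> 0" "lo \<le> u"
  shows "G u = integral {lo..u} g - integral {lo..0} g"
proof (cases "0 \<le> u")
  case True
  have "integral {lo..0} g + integral {0..u} g = integral {lo..u} g"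
    using assms True Henstock_Kurzweil_Integration.integral_combine[where a=lo and c=0 and b=u and f=g]
    by (auto intro: integrable_continuous_interval cont_g)
  moreover have "integral {u..0} g = 0"
    using True by (cases "u = 0") auto
  ultimately show ?thesis unfolding G_def by simp
next
  case False
  have "integral {lo..u} g + integral {u..0} g = integral {lo..0} g"
    using assms False Henstock_Kurzweil_Integration.integral_combine[where a=lo and c=u and b=0 and f=g]
    by (auto intro: integrable_continuous_interval cont_g)
  moreover have "integral {0..u} g = 0"
    using False by auto
  ultimately show ?thesis unfolding G_def by simp
qed

lemma DERIV_G: "(G has_real_derivative g t) (at t)"
proof -
  define lo where "lo = min 0 t - 1"
  define hi where "hi = max 0 t + 1"
  have "((\<lambda>u. integral {lo..u} g) has_real_derivative g t) (at t within {lo..hi})"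
    by (rule integral_has_real_derivative) (auto intro: cont_g simp: lo_def hi_def)
  moreover have "at t within {lo..hi} = at t"
    by (rule at_within_Icc_at) (auto simp: lo_def hi_def)
  ultimately have "((\<lambda>u. integral {lo..u} g - integral {lo..0} g) has_real_derivative g t) (at t)"
    by (auto intro!: derivative_eq_intros)
  then show ?thesis
    by (rule has_field_derivative_transform_within_open[where S="{lo<..<hi}"])
       (auto simp: lo_def hi_def G_eq[symmetric])
qed

lemma DERIV_x: "(x has_real_derivative g t) (at t)"
  unfolding x_def[abs_def] by (auto intro!: derivative_eq_intros DERIV_G)

lemma deriv_x: "deriv x = g"
  using DERIV_x by (auto intro!: ext DERIV_imp_deriv)

lemma x0: "x 0 = a" unfolding x_def G_def by simp

lemma cont_x: "continuous_on S x"
  using DERIV_x by (meson DERIV_isCont continuous_at_imp_continuous_on)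

definition "v t = N t * cos (x t) - M t * sin (x t)"
definition "w t = M t * cos (x t) + N t * sin (x t)"

lemma v_alg:
  fixes DD MM NN EE gg c s bb :: real
  assumes "DD = MM^2 + NN^2" "gg * DD = MM * EE + NN^2" "MM = 2 * (1 - bb) + EE"
  shows "2 * (EE * c - NN * gg * s + NN * s - gg * MM * c) * (NN * c - MM * s) * DD
      - (NN * c - MM * s)^2 * (- 4 * (1 - bb) * NN) = 0"
proof -
  have "2 * DD * (EE * c + NN * s - gg * (NN * s + MM * c)) = -4 * (1 - bb) * NN * (NN * c - MM * s)"
  proof -
    have "2 * DD * (EE * c + NN * s - gg * (NN * s + MM * c)) =
       2 * DD * EE * c + 2 * DD * NN * s - 2 * (gg * DD) * (NN * s + MM * c)" by (simp add: algebra_simps)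
    also have "\<dots> = -4 * (1 - bb) * NN * (NN * c - MM * s)"
      unfolding assms(2) unfolding assms(1) assms(3) by (simp add: power2_eq_square algebra_simps)
    finally show ?thesis .
  qed
  then show ?thesis by algebra
qed

lemma v_zero: "v t = 0"
proof -
  have der: "((\<lambda>t. (v t)^2 / D t) has_real_derivative 0) (at t)" for t
  proof -
    have "((\<lambda>t. (v t)^2 / D t) has_real_derivative
       (2 * v t * (E t * cos (x t) - N t * g t * sin (x t) + N t * sin (x t) - g t * M t * cos (x t)) * D t
        - (v t)^2 * (- 4 * (1 - b) * N t)) / (D t)^2) (at t)"
      unfolding v_def[abs_def]
      apply (rule derivative_eq_intros refl DERIV_N DERIV_M DERIV_D DERIV_x D_ne | simp)+
      by (simp add: power2_eq_square algebra_simps)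
    moreover have "2 * v t * (E t * cos (x t) - N t * g t * sin (x t) + N t * sin (x t) - g t * M t * cos (x t)) * D t
        - (v t)^2 * (- 4 * (1 - b) * N t) = 0"
      using v_alg[OF DMN[of t] gD[of t] ME[of t], of "cos (x t)" "sin (x t)"] unfolding v_def
      by (simp add: algebra_simps)
    ultimately show ?thesis by simp
  qed
  have "(v t)^2 / D t = (v 0)^2 / D 0" by (rule DERIV_isconst_all) (use der in auto)
  moreover have "v 0 = 0" unfolding v_def x0 M0 N0 A_def sin_double by (simp add: power2_eq_square)
  ultimately show ?thesis using D_pos[of t] by simp
qed

end

context L begin

lemma w_sq: "(w t)^2 = D t"
proof -
  have "(w t)^2 + (v t)^2 = (M t ^2 + N t^2) * ((sin (x t))^2 + (cos (x t))^2)"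
    unfolding w_def v_def by algebra
  then show ?thesis using v_zero DMN by (simp only: sin_cos_squared_add) simp
qed

lemma cont_w: "continuous_on S w"
  unfolding w_def[abs_def] M_def[abs_def] N_def[abs_def]
  by (auto intro!: continuous_intros cont_x)

lemma w0: "w 0 = 2 * cos a"
proof -
  have "sin a ^ 2 + cos a ^ 2 = 1" by simp
  then show ?thesis unfolding w_def x0 M0 N0 A_def sin_double by algebra
qed

lemma w_ne: "w t \<noteq> 0"
  using w_sq[of t] D_pos[of t] by auto

lemma w_pos: "w t > 0"
proof (rule ccontr)
  assume "\<not> w t > 0"
  then have wt: "w t \<le> 0" by simp
  have w0p: "w 0 > 0" using w0 cosa_pos by simp
  show False
  proof (cases "0 \<le> t")
    case True
    obtain s where "0 \<le> s" "s \<le> t" "w s = 0"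
      using IVT2'[of w t 0 0] wt w0p True cont_w by force
    then show False using w_ne by blast
  next
    case False
    obtain s where "t \<le> s" "s \<le> 0" "w s = 0"
      using IVT'[of w t 0 0] wt w0p False cont_w by force
    then show False using w_ne by blast
  qed
qed

lemma w_sqrt: "w t = sqrt (D t)"
  using w_sq[of t] w_pos[of t] by (metis abs_of_pos real_sqrt_abs)

lemma sqrtD_pos: "sqrt (D t) > 0" using D_pos by simp

lemma cos_x: "cos (x t) = M t / sqrt (D t)"
proof -
  have "M t * w t + N t * v t = D t * cos (x t)"
    unfolding w_def v_def DMN by (simp add: power2_eq_square algebra_simps)
  then have "M t * sqrt (D t) = D t * cos (x t)" using v_zero w_sqrt by simp
  moreover have "D t = sqrt (D t) * sqrt (D t)" using D_pos[of t] by simp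
  ultimately have "sqrt (D t) * M t = sqrt (D t) * (sqrt (D t) * cos (x t))" by (simp add: algebra_simps)
  then have "M t = sqrt (D t) * cos (x t)" using sqrtD_pos[of t] by simp
  then show ?thesis using sqrtD_pos[of t] by (simp add: field_simps)
qed

lemma sin_x: "sin (x t) = N t / sqrt (D t)"
proof -
  have "N t * w t - M t * v t = D t * sin (x t)"
    unfolding w_def v_def DMN by (simp add: power2_eq_square algebra_simps)
  then have "N t * sqrt (D t) = D t * sin (x t)" using v_zero w_sqrt by simp
  moreover have "D t = sqrt (D t) * sqrt (D t)" using D_pos[of t] by simp
  ultimately have "sqrt (D t) * N t = sqrt (D t) * (sqrt (D t) * sin (x t))" by (simp add: algebra_simps)
  then have "N t = sqrt (D t) * sin (x t)" using sqrtD_pos[of t] by simp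
  then show ?thesis using sqrtD_pos[of t] by (simp add: field_simps)
qed


lemma cos_x_zero_iff: "cos (x t) = 0 \<longleftrightarrow> M t = 0"
  using sqrtD_pos[of t] by (simp add: cos_x)

lemma g_one_iff: "g t = 1 \<longleftrightarrow> M t = 0"
proof -
  have "g t = 1 \<longleftrightarrow> 1 - g t = 0" by auto
  also have "\<dots> \<longleftrightarrow> M t = 0" unfolding one_minus_g using hb2 D_pos[of t] by simp
  finally show ?thesis .
qed

lemma tan_x: "M t \<noteq> 0 \<Longrightarrow> tan (x t) = N t / M t"
  using sqrtD_pos[of t] by (simp add: tan_def cos_x sin_x)

definition "cc = (2 * b - 1) * (cos a)^2 / (1 - b)^2"

lemma cc_K: "cc = K / (2 * (1 - b)^2)"
proof -
  have "K = 2 * ((2*b-1)*(cos a)^2)" by (simp add: K_def)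
  then show ?thesis unfolding cc_def by (simp only: mult_divide_mult_cancel_left)
qed

lemma energy_eq: "M t \<noteq> 0 \<Longrightarrow> energy x t = cc"
proof -
  assume Mt: "M t \<noteq> 0"
  have Dp: "D t > 0" by (rule D_pos)
  have "energy x t = (M t)^2 / D t * (2 * g t - 1) / (1 - g t)^2"
    unfolding energy_def deriv_x cos_x using Dp by (simp add: power_divide)
  also have "2 * g t - 1 = 2 * K / D t" unfolding g_def using Dp by (simp add: field_simps)
  also have "1 - g t = 2 * (1 - b) * M t / D t" by (rule one_minus_g)
  finally have "energy x t = (M t)^2 / D t * (2 * K / D t) / (2 * (1 - b) * M t / D t)^2" .
  also have "\<dots> = K / (2 * (1 - b)^2)"
    using Mt Dp hb2 by (simp add: field_simps power_mult_distrib) (simp add: power2_eq_square algebra_simps)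
  finally show ?thesis unfolding cc_K .
qed

lemma deriv_g: "deriv g t = 4 * (1 - b) * K * N t / (D t)^2"
  using DERIV_g by (rule DERIV_imp_deriv)

lemma deriv2_x: "deriv (deriv x) t = 4 * (1 - b) * K * N t / (D t)^2"
  unfolding deriv_x deriv_g ..

lemma ode2_alg:
  fixes MM NN DD SS KK uu :: real
  assumes "MM \<noteq> 0" "DD > 0" "SS > 0" "uu \<noteq> 0" "KK = (DD - 4 * uu * MM) / 2"
  shows "(MM / SS) / (2 * uu * MM / DD)^2 * (4 * uu * KK * NN / DD^2)
       - (NN / SS) / (2 * uu * MM / DD) * ((DD / 2 + KK) / DD) = - (NN / SS)"
proof -
  have h: "uu \<noteq> 0" using assms by simp
  have t1: "(MM / SS) / (2 * uu * MM / DD)^2 * (4 * uu * KK * NN / DD^2)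
      = KK * NN / (uu * MM * SS)"
    using assms(1-3) h by (simp add: field_simps power2_eq_square)
  have t2: "(NN / SS) / (2 * uu * MM / DD) * ((DD / 2 + KK) / DD)
      = NN * (DD / 2 + KK) / (2 * uu * MM * SS)"
    using assms(1-3) h by (simp add: field_simps)
  have t3: "KK * NN / (uu * MM * SS) - NN * (DD / 2 + KK) / (2 * uu * MM * SS)
      = NN * (KK - DD / 2) / (2 * uu * MM * SS)"
    using assms(1-3) h by (simp add: field_simps)
  have t4: "KK - DD / 2 = - 2 * uu * MM" unfolding assms(5) by (simp add: field_simps)
  show ?thesis unfolding t1 t2 t3 t4 using assms(1-3) h by (simp add: field_simps)
qed

lemma ode2: "M t \<noteq> 0 \<Longrightarrow>
   cos (x t) / (1 - deriv x t)^2 * deriv (deriv x) t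
            - sin (x t) / (1 - deriv x t) * deriv x t = - sin (x t)"
proof -
  assume Mt: "M t \<noteq> 0"
  have Dp: "D t > 0" by (rule D_pos)
  have e2: "deriv x t = (D t / 2 + K) / D t" unfolding deriv_x g_def using Dp by (simp add: field_simps)
  have e1: "1 - deriv x t = 2 * (1 - b) * M t / D t" unfolding deriv_x by (rule one_minus_g)
  have kk: "K = (D t - 4 * (1 - b) * M t) / 2" using D_minus_2K[of t] by simp
  show ?thesis
    unfolding e1 deriv2_x cos_x sin_x
    unfolding e2
    by (rule ode2_alg[OF Mt Dp sqrtD_pos _ kk], use hb2 in simp)
qed

lemma ode1: "M t \<noteq> 0 \<Longrightarrow>
   ((\<lambda>s. cos (x s) / (1 - deriv x s)) has_real_derivative - sin (x t)) (at t)"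
proof -
  assume Mt: "M t \<noteq> 0"
  have hb: "1 - b \<noteq> 0" using hb2 by simp
  have "((\<lambda>s. sqrt (D s) / (2 * (1 - b))) has_real_derivative
     (inverse (sqrt (D t)) / 2 * (- 4 * (1 - b) * N t)) / (2 * (1 - b))) (at t)"
    by (rule DERIV_cdivide, rule DERIV_chain2[OF DERIV_real_sqrt DERIV_D]) (rule D_pos)
  moreover have "(inverse (sqrt (D t)) / 2 * (- 4 * (1 - b) * N t)) / (2 * (1 - b)) = - sin (x t)"
    unfolding sin_x using hb sqrtD_pos[of t] by (simp add: field_simps)
  ultimately have d: "((\<lambda>s. sqrt (D s) / (2 * (1 - b))) has_real_derivative - sin (x t)) (at t)"
    by simp
  have op: "open {s. M s \<noteq> 0}"
    by (rule open_Collect_neq) (auto simp: M_def[abs_def] intro!: continuous_intros)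
  show ?thesis
  proof (rule has_field_derivative_transform_within_open[OF d op])
    show "t \<in> {s. M s \<noteq> 0}" using Mt by simp
    fix s assume "s \<in> {s. M s \<noteq> 0}"
    then have Ms: "M s \<noteq> 0" by simp
    have "D s = sqrt (D s) * sqrt (D s)" using D_pos[of s] by simp
    then show "sqrt (D s) / (2 * (1 - b)) = cos (x s) / (1 - deriv x s)"
      unfolding deriv_x one_minus_g cos_x using Ms hb sqrtD_pos[of s]
      by (simp add: field_simps)
  qed
qed

end

inductive_set tp :: "(real \<Rightarrow> real) set" where
  tp_const: "(\<lambda>t. c) \<in> tp"
| tp_cos: "cos \<in> tp"
| tp_sin: "sin \<in> tp"
| tp_add: "f \<in> tp \<Longrightarrow> h \<in> tp \<Longrightarrow> (\<lambda>t. f t + h t) \<in> tp"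
| tp_mult: "f \<in> tp \<Longrightarrow> h \<in> tp \<Longrightarrow> (\<lambda>t. f t * h t) \<in> tp"

lemma tp_deriv: "f \<in> tp \<Longrightarrow> \<exists>f'\<in>tp. \<forall>t. (f has_real_derivative f' t) (at t)"
proof (induction rule: tp.induct)
  case (tp_const c)
  show ?case by (rule bexI[of _ "\<lambda>t. 0"]) (auto intro: tp.tp_const)
next
  case tp_cos
  have "(\<lambda>t. (\<lambda>t. -1) t * sin t) \<in> tp" by (intro tp.intros)
  then show ?case by (intro bexI[of _ "\<lambda>t. (\<lambda>t. -1) t * sin t"]) (auto intro!: derivative_eq_intros)
next
  case tp_sin
  show ?case by (intro bexI[of _ cos]) (auto intro!: derivative_eq_intros tp.intros)
next
  case (tp_add f h)
  then obtain f' h' where "f' \<in> tp" "h' \<in> tp" "\<forall>t. (f has_real_derivative f' t) (at t)"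
     "\<forall>t. (h has_real_derivative h' t) (at t)" by blast
  then show ?case
    by (intro bexI[of _ "\<lambda>t. f' t + h' t"]) (auto intro!: derivative_eq_intros tp.intros)
next
  case (tp_mult f h)
  then obtain f' h' where "f' \<in> tp" "h' \<in> tp" "\<forall>t. (f has_real_derivative f' t) (at t)"
     "\<forall>t. (h has_real_derivative h' t) (at t)" by blast
  then show ?case
    using tp_mult.hyps
    by (intro bexI[of _ "\<lambda>t. (\<lambda>t. f' t * h t) t + (\<lambda>t. f t * h' t) t"])
       (auto intro!: derivative_eq_intros tp.intros)
qed

lemma tp_trig: "(\<lambda>t. c0 + c1 * cos t + c2 * sin t) \<in> tp"
proof -
  have "(\<lambda>t. (\<lambda>t. (\<lambda>t. c0) t + (\<lambda>t. (\<lambda>t. c1) t * cos t) t) t + (\<lambda>t. (\<lambda>t. c2) t * sin t) t) \<in> tp"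
    by (intro tp.intros)
  then show ?thesis by simp
qed

context L begin

lemma D_tp: "D \<in> tp"
proof -
  have "D = (\<lambda>t. (A^2 + B^2 + 4 * (1 - b)^2) + (4 * (1 - b) * B) * cos t + (- 4 * (1 - b) * A) * sin t)"
    by (auto simp: D_def algebra_simps)
  then show ?thesis using tp_trig by simp
qed

lemma numg_tp: "(\<lambda>t. D t / 2 + K) \<in> tp"
proof -
  have "(\<lambda>t. D t / 2 + K) = (\<lambda>t. (A^2 + B^2 + 4 * (1 - b)^2) / 2 + K + (2 * (1 - b) * B) * cos t + (- 2 * (1 - b) * A) * sin t)"
    by (rule ext) (simp add: D_def field_simps)
  then show ?thesis using tp_trig by simp
qed

definition "sm = {f. \<exists>p n. p \<in> tp \<and> f = (\<lambda>t. p t * inverse (D t) ^ n)}"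

lemma sm_step:
  assumes "f \<in> sm"
  shows "(\<forall>t. f differentiable (at t)) \<and> deriv f \<in> sm"
proof -
  obtain p n where p: "p \<in> tp" and f: "f = (\<lambda>t. p t * inverse (D t) ^ n)" using assms sm_def by auto
  obtain p' where p': "p' \<in> tp" "\<forall>t. (p has_real_derivative p' t) (at t)" using tp_deriv[OF p] by blast
  obtain D' where D': "D' \<in> tp" "\<forall>t. (D has_real_derivative D' t) (at t)" using tp_deriv[OF D_tp] by blast
  define q where "q = (\<lambda>t. (\<lambda>t. p' t * D t) t + (\<lambda>t. (\<lambda>t. - real n) t * (\<lambda>t. p t * D' t) t) t)"
  have q: "q \<in> tp" unfolding q_def by (intro tp.intros p p' D' D_tp)
  have der: "(f has_real_derivative q t * inverse (D t) ^ (Suc n)) (at t)" for t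
  proof -
    have Dn: "D t \<noteq> 0" by (rule D_ne)
    have "(f has_real_derivative p' t * inverse (D t) ^ n +
        p t * (of_nat n * inverse (D t) ^ (n - 1) * (- (inverse (D t) * D' t * inverse (D t))))) (at t)"
      unfolding f using p'(2) D'(2) Dn
      by (auto intro!: derivative_eq_intros)
    moreover have "p' t * inverse (D t) ^ n +
        p t * (of_nat n * inverse (D t) ^ (n - 1) * (- (inverse (D t) * D' t * inverse (D t))))
      = q t * inverse (D t) ^ (Suc n)"
    proof (cases n)
      case 0
      then show ?thesis unfolding q_def using Dn by (simp add: field_simps)
    next
      case (Suc m)
      have "inverse (D t) ^ n = D t * inverse (D t) ^ Suc n" using Dn Suc by (simp add: field_simps)
      then show ?thesis unfolding q_def using Dn Suc by (simp add: algebra_simps)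
    qed
    ultimately show ?thesis by simp
  qed
  have "deriv f = (\<lambda>t. q t * inverse (D t) ^ (Suc n))"
    using der by (auto intro!: ext DERIV_imp_deriv)
  then have "deriv f \<in> sm" unfolding sm_def using q by blast
  moreover have "\<forall>t. f differentiable (at t)" using der real_differentiable_def by blast
  ultimately show ?thesis by blast
qed

lemma sm_iter: "f \<in> sm \<Longrightarrow> (deriv ^^ n) f \<in> sm"
  by (induction n) (auto dest: sm_step)

lemma g_sm: "g \<in> sm"
proof -
  have "g = (\<lambda>t. (\<lambda>t. D t / 2 + K) t * inverse (D t) ^ 1)"
    using D_ne by (auto intro!: ext simp: g_def field_simps)
  then show ?thesis unfolding sm_def using numg_tp by blast
qed

lemma smooth_x: "smooth_real x"
  unfolding smooth_real_def
proof (intro allI)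
  fix n t
  show "(deriv ^^ n) x differentiable (at t)"
  proof (cases n)
    case 0
    then show ?thesis using DERIV_x real_differentiable_def by auto
  next
    case (Suc m)
    have "(deriv ^^ n) x = (deriv ^^ m) g" unfolding Suc funpow_Suc_right comp_apply deriv_x ..
    then show ?thesis using sm_step[OF sm_iter[OF g_sm, of m]] by simp
  qed
qed

end

context L begin

lemma K_neg: "b < 1/2 \<Longrightarrow> K < 0"
  using cosa_pos unfolding K_def by (simp add: mult_neg_pos)
lemma K_pos: "b > 1/2 \<Longrightarrow> K > 0"
  using cosa_pos unfolding K_def by simp

lemma E_sq_le: "(E t)^2 \<le> A^2 + B^2"
proof -
  have "0 \<le> (N t)^2" by simp
  then show ?thesis using EN[of t] by linarith
qed

lemma M_pos: assumes "b < 1/2" shows "M t > 0"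
proof (rule ccontr)
  assume "\<not> M t > 0"
  then have h: "2 * (1 - b) \<le> - E t" unfolding ME by simp
  have "(2 * (1 - b))^2 \<le> (- E t)^2"
    by (rule power_mono[OF h]) (use assms in simp)
  moreover have "(2 * (1 - b))^2 = 4 * (1 - b)^2" by (simp add: power2_eq_square algebra_simps)
  ultimately have "4 * (1 - b)^2 \<le> (E t)^2" by simp
  moreover have "A^2 + B^2 < 4 * (1 - b)^2" using RR K_neg[OF assms] by simp
  ultimately show False using E_sq_le[of t] by simp
qed

lemma g_lt: "b < 1/2 \<Longrightarrow> g t < 1/2"
  using K_neg D_pos[of t] by (simp add: g_def divide_neg_pos)

lemma g_gt: "b > 1/2 \<Longrightarrow> g t > 1/2"
  using K_pos D_pos[of t] by (simp add: g_def)

lemma x_hit: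
  assumes "b < 1/2" and "x t = y" and that: "y = pi/2 \<or> y = -(pi/2)"
  shows False
proof -
  have "cos (x t) \<noteq> 0" using M_pos[OF assms(1), of t] cos_x_zero_iff by auto
  moreover have "cos y = 0" using that by (metis cos_pi_half cos_minus)
  ultimately show False using assms(2) by simp
qed

lemma x_bound: assumes "b < 1/2" shows "- (pi/2) < x t \<and> x t < pi/2"
proof -
  have a1: "- (pi/2) < x 0" "x 0 < pi/2" using ha x0 by auto
  have c: "continuous_on S x" for S by (rule cont_x)
  have ex: "\<exists>s. x s = y" if hy: "min (x 0) (x t) \<le> y" "y \<le> max (x 0) (x t)" for y
  proof (cases "0 \<le> t")
    case True
    show ?thesis
    proof (cases "x 0 \<le> x t")
      case True
      then obtain s where "x s = y" using IVT'[where f=x and a=0 and y=y and b=t] \<open>0 \<le> t\<close> hy c by auto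
      then show ?thesis by blast
    next
      case False
      then obtain s where "x s = y" using IVT2'[where f=x and a=0 and y=y and b=t] \<open>0 \<le> t\<close> hy c by auto
      then show ?thesis by blast
    qed
  next
    case False
    then have "t \<le> 0" by simp
    show ?thesis
    proof (cases "x t \<le> x 0")
      case True
      then obtain s where "x s = y" using IVT'[where f=x and a=t and y=y and b=0] \<open>t \<le> 0\<close> hy c by auto
      then show ?thesis by blast
    next
      case False
      then obtain s where "x s = y" using IVT2'[where f=x and a=t and y=y and b=0] \<open>t \<le> 0\<close> hy c by auto
      then show ?thesis by blast
    qed
  qed
  have "x t < pi/2"
  proof (rule ccontr)
    assume "\<not> x t < pi / 2"
    then obtain s where "x s = pi/2" using ex[of "pi/2"] a1 by auto
    then show False using x_hit[OF assms] by blast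
  qed
  moreover have "- (pi/2) < x t"
  proof (rule ccontr)
    assume "\<not> - (pi/2) < x t"
    then obtain s where "x s = -(pi/2)" using ex[of "-(pi/2)"] a1 by auto
    then show False using x_hit[OF assms] by blast
  qed
  ultimately show ?thesis by simp
qed

lemma x_arctan: assumes "b < 1/2" shows "x t = arctan (N t / M t)"
proof -
  have "M t \<noteq> 0" using M_pos[OF assms, of t] by simp
  then have "tan (x t) = N t / M t" by (rule tan_x)
  moreover have "- (pi/2) < x t" "x t < pi/2" using x_bound[OF assms] by auto
  ultimately show ?thesis using arctan_tan[of "x t"] by simp
qed

lemma periodic_iff: "periodic_real x \<longleftrightarrow> b < 1/2"
proof
  assume "b < 1/2"
  have "x (t + 2 * pi) = x t" for t
    unfolding x_arctan[OF \<open>b < 1/2\<close>] by (simp add: N_def M_def)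
  then show "periodic_real x" unfolding periodic_real_def
    by (intro exI[of _ "2 * pi"]) auto
next
  assume "periodic_real x"
  then obtain T where T: "T > 0" "\<And>t. x (t + T) = x t" unfolding periodic_real_def by auto
  show "b < 1/2"
  proof (rule ccontr)
    assume "\<not> b < 1/2"
    then have "b > 1/2" using hb1 by simp
    have "x 0 < x T"
    proof (rule DERIV_pos_imp_increasing[OF T(1)])
      fix s :: real
      show "\<exists>y. (x has_real_derivative y) (at s) \<and> y > 0"
        using DERIV_x[of s] g_gt[OF \<open>b > 1/2\<close>, of s] by (intro exI[of _ "g s"]) auto
    qed
    moreover have "x (0 + T) = x 0" by (rule T(2))
    ultimately show False by simp
  qed
qed

end

context L begin

lemma R2_pos: "A^2 + B^2 > 0"
proof (rule ccontr)
  assume "\<not> A^2 + B^2 > 0"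
  moreover have "0 \<le> A^2 + B^2" by simp
  ultimately have "A^2 + B^2 = 0" by linarith
  then have "A^2 = 0 \<and> B^2 = 0" by (simp add: add_nonneg_eq_0_iff)
  then have A0: "A = 0" and B0: "B = 0" by auto
  have l: "- pi < 2 * a" "2 * a < pi" using ha by (auto simp: abs_less_iff)
  have "2 * a = 0" using A0 unfolding A_def by (rule sin_eq_0_pi[OF l])
  then have "a = 0" by simp
  then have "b = 0" using B0 unfolding B_def by simp
  then show False using hab \<open>a = 0\<close> by simp
qed

lemma c1_alg:
  fixes KK w v u :: real
  assumes "KK \<noteq> 0" "w \<noteq> 0" "v \<noteq> 0" "u \<noteq> 0"
  shows "(2 * KK / w * v / (2 * u))^2 / (KK / (2 * u^2) * v^2 / w) = 2 * KK / w"
  using assms by (simp add: field_simps power2_eq_square)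

definition "Ov = {z. \<bar>fst z\<bar> < pi/2 \<and> snd z < 1/2 \<and> (cos (fst z))^2 * (2 * snd z - 1) = cc * (1 - snd z)^2}"

lemma orbit_sub: assumes "b < 1/2" shows "phase_orbit x \<subseteq> Ov"
proof
  fix z assume "z \<in> phase_orbit x"
  then obtain t where z: "z = (x t, g t)" unfolding phase_orbit_def deriv_x by auto
  have Mt: "M t \<noteq> 0" using M_pos[OF assms, of t] by simp
  have gl: "g t < 1/2" by (rule g_lt[OF assms])
  have "energy x t = cc" by (rule energy_eq[OF Mt])
  then have "(cos (x t))^2 * (2 * g t - 1) / (1 - g t)^2 = cc" unfolding energy_def deriv_x .
  then have "(cos (x t))^2 * (2 * g t - 1) = cc * (1 - g t)^2" using gl by (simp add: field_simps)
  moreover have "\<bar>x t\<bar> < pi/2" using x_bound[OF assms, of t] by auto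
  ultimately show "z \<in> Ov" unfolding Ov_def z using gl by simp
qed

lemma O_sub: assumes "b < 1/2" shows "Ov \<subseteq> phase_orbit x"
proof
  fix z assume "z \<in> Ov"
  then obtain p q where z: "z = (p, q)" and hp: "\<bar>p\<bar> < pi/2" and hq: "q < 1/2"
    and he: "(cos p)^2 * (2 * q - 1) = cc * (1 - q)^2" unfolding Ov_def by (cases z) auto
  define u where "u = 1 - b"
  have u: "u > 0" using assms by (simp add: u_def)
  have Kn: "K < 0" by (rule K_neg[OF assms])
  have cp: "cos p > 0" using hp by (intro cos_gt_zero_pi) auto
  have q1: "2 * q - 1 < 0" using hq by simp
  define D0 where "D0 = 2 * K / (2 * q - 1)"
  have D0p: "D0 > 0" unfolding D0_def using Kn q1 by (simp add: divide_neg_neg)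
  define M0 where "M0 = D0 * (1 - q) / (2 * u)"
  have M0p: "M0 > 0" unfolding M0_def using D0p u hq by simp
  define N0 where "N0 = M0 * sin p / cos p"
  define E0 where "E0 = M0 - 2 * u"
  have ccu: "cc = K / (2 * u^2)" unfolding cc_K u_def ..
  have cos2: "(cos p)^2 = cc * (1 - q)^2 / (2 * q - 1)" using he q1 by (simp add: field_simps)
  have c1: "M0^2 + N0^2 = D0"
  proof -
    have "M0^2 + N0^2 = M0^2 / (cos p)^2"
    proof -
      have e: "N0^2 = M0^2 * (sin p)^2 / (cos p)^2" unfolding N0_def by (simp add: power_divide power_mult_distrib)
      have "M0^2 + N0^2 = (M0^2 * (cos p)^2 + M0^2 * (sin p)^2) / (cos p)^2"
        using cp unfolding e by (simp add: add_divide_distrib)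
      also have "\<dots> = M0^2 * ((cos p)^2 + (sin p)^2) / (cos p)^2" by (simp only: distrib_left)
      also have "\<dots> = M0^2 / (cos p)^2" by simp
      finally show ?thesis .
    qed
    also have "\<dots> = D0"
      unfolding cos2 ccu M0_def D0_def using u q1 Kn hq
      by (intro c1_alg) auto
    finally show ?thesis .
  qed
  have c2: "E0^2 + N0^2 = A^2 + B^2"
  proof -
    have "E0^2 + N0^2 = (M0^2 + N0^2) - 4 * u * M0 + 4 * u^2"
      unfolding E0_def by (simp add: power2_eq_square algebra_simps)
    also have "\<dots> = D0 - 2 * D0 * (1 - q) + 4 * u^2"
    proof -
      have "4 * u * M0 = 2 * D0 * (1 - q)" unfolding M0_def using u by (simp add: field_simps)
      then show ?thesis using c1 by simp
    qed
    also have "\<dots> = D0 * (2 * q - 1) + 4 * u^2" by (simp add: algebra_simps)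
    also have "D0 * (2 * q - 1) = 2 * K" unfolding D0_def using q1 by simp
    finally show ?thesis using RR unfolding u_def by simp
  qed
  define R2 where "R2 = A^2 + B^2"
  have R2p: "R2 > 0" unfolding R2_def by (rule R2_pos)
  define c0 where "c0 = (B * E0 + A * N0) / R2"
  define s0 where "s0 = (B * N0 - A * E0) / R2"
  have "c0^2 + s0^2 = 1"
  proof -
    have "(B * E0 + A * N0)^2 + (B * N0 - A * E0)^2 = R2 * (E0^2 + N0^2)"
      unfolding R2_def by (simp add: power2_eq_square algebra_simps)
    also have "\<dots> = R2^2" using c2 unfolding R2_def by (simp add: power2_eq_square)
    finally show ?thesis unfolding c0_def s0_def using R2p by (simp add: field_simps add_divide_distrib[symmetric])
  qed
  then obtain t where ct: "c0 = cos t" and st: "s0 = sin t" by (rule sincos_total_2pi)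
  have Et: "E t = E0"
  proof -
    have "B * c0 - A * s0 = (B * (B * E0 + A * N0) - A * (B * N0 - A * E0)) / R2"
      unfolding c0_def s0_def using R2p by (simp add: field_simps)
    also have "B * (B * E0 + A * N0) - A * (B * N0 - A * E0) = R2 * E0"
      unfolding R2_def by (simp add: algebra_simps power2_eq_square)
    finally show ?thesis unfolding E_def ct st using R2p by simp
  qed
  have Nt: "N t = N0"
  proof -
    have "A * c0 + B * s0 = (A * (B * E0 + A * N0) + B * (B * N0 - A * E0)) / R2"
      unfolding c0_def s0_def using R2p by (simp add: field_simps)
    also have "A * (B * E0 + A * N0) + B * (B * N0 - A * E0) = R2 * N0"
      unfolding R2_def by (simp add: algebra_simps power2_eq_square)
    finally show ?thesis unfolding N_def ct st using R2p by simp
  qed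
  have Mt: "M t = M0" unfolding ME Et E0_def u_def by simp
  have Dt: "D t = D0" unfolding DMN Mt Nt c1 ..
  have M0n: "M0 \<noteq> 0" using M0p by simp
  have "tan (x t) = N t / M t" by (rule tan_x) (simp add: Mt M0n)
  also have "\<dots> = N0 / M0" unfolding Mt Nt ..
  also have "\<dots> = sin p / cos p" unfolding N0_def using M0n by simp
  also have "\<dots> = tan p" by (simp add: tan_def)
  finally have tt: "tan (x t) = tan p" .
  have xb: "- (pi/2) < x t" "x t < pi/2" using x_bound[OF assms, of t] by auto
  have pb: "- (pi/2) < p" "p < pi/2" using hp by (auto simp: abs_less_iff)
  have "x t = arctan (tan (x t))" using arctan_tan[OF xb] by simp
  also have "\<dots> = arctan (tan p)" unfolding tt ..
  also have "\<dots> = p" using arctan_tan[OF pb] .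
  finally have xt: "x t = p" .
  have kd: "K / (2 * K / (2 * q - 1)) = (2 * q - 1) / 2" using Kn q1 by (simp add: field_simps)
  have gt: "g t = q" unfolding g_def Dt D0_def kd by (simp add: field_simps)
  show "z \<in> phase_orbit x" unfolding phase_orbit_def z
  proof (rule image_eqI[of _ _ t])
    show "(p, q) = (x t, deriv x t)" using xt gt by (simp add: deriv_x)
  qed simp
qed

lemma orbit_eq: "b < 1/2 \<Longrightarrow> phase_orbit x = Ov"
  using orbit_sub O_sub by blast

end

context L begin

lemma cc_gt: "cc > -1"
proof -
  have u: "(1 - b)^2 > 0" using hb2 by simp
  have s: "(sin a)^2 = 1 - (cos a)^2" by (simp add: sin_squared_eq)
  have key: "(2 * b - 1) * (cos a)^2 + (1 - b)^2 = b^2 - (2 * b - 1) * (sin a)^2"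
    unfolding s by (simp add: power2_eq_square algebra_simps)
  have pos: "b^2 - (2 * b - 1) * (sin a)^2 > 0"
  proof (cases "b < 1/2")
    case True
    have nn: "- (2 * b - 1) * (sin a)^2 \<ge> 0" using True by simp
    show ?thesis
    proof (cases "b = 0")
      case True
      then have "a \<noteq> 0" using hab by simp
      have l: "- pi < a" "a < pi" using ha by (auto simp: abs_less_iff)
      have "sin a \<noteq> 0" using sin_eq_0_pi[OF l] \<open>a \<noteq> 0\<close> by blast
      then show ?thesis using True by simp
    next
      case False
      then have "b^2 > 0" by simp
      then show ?thesis using nn by linarith
    qed
  next
    case False
    then have b1: "b > 1/2" using hb1 by simp
    have "(sin a)^2 \<le> 1" by (simp add: abs_square_le_1)
    then have "(2 * b - 1) * (sin a)^2 \<le> (2 * b - 1)" using b1 by (simp add: mult_left_le)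
    moreover have "b^2 - (2 * b - 1) = (b - 1)^2" by (simp add: power2_eq_square algebra_simps)
    moreover have "(b - 1)^2 > 0" using hb2 by simp
    ultimately show ?thesis by linarith
  qed
  have "cc + 1 = ((2 * b - 1) * (cos a)^2 + (1 - b)^2) / (1 - b)^2"
    unfolding cc_def using u by (simp add: field_simps)
  also have "\<dots> > 0" unfolding key using pos u by simp
  finally show ?thesis by simp
qed

lemma cc_neg: "b < 1/2 \<Longrightarrow> cc < 0"
  unfolding cc_K using K_neg hb2 by (simp add: divide_neg_pos)

lemma cc_pos: "b > 1/2 \<Longrightarrow> cc > 0"
  unfolding cc_K using K_pos hb2 by simp

definition "U = {z. \<bar>fst z\<bar> < pi/2} \<inter> {z. (cos (fst z))^2 * (2 * snd z - 1) < cc * (1 - snd z)^2}"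

lemma U_open: "open U"
  unfolding U_def
  by (intro open_Int open_Collect_less) (auto intro!: continuous_intros)

lemma U_q: "z \<in> U \<Longrightarrow> b < 1/2 \<Longrightarrow> snd z < 1/2"
proof (rule ccontr)
  assume z: "z \<in> U" and b: "b < 1/2" and "\<not> snd z < 1/2"
  then have "2 * snd z - 1 \<ge> 0" by simp
  then have "(cos (fst z))^2 * (2 * snd z - 1) \<ge> 0" by simp
  moreover have "cc * (1 - snd z)^2 \<le> 0" using cc_neg[OF b] by (simp add: mult_nonpos_nonneg)
  ultimately show False using z unfolding U_def by simp
qed

lemma U_bounded: assumes b: "b < 1/2" shows "bounded U"
proof -
  define m where "m = - cc"
  have m: "m > 0" using cc_neg[OF b] by (simp add: m_def)
  have "U \<subseteq> {-(pi/2)..pi/2} \<times> {1 - 2 / m .. 1/2}"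
  proof
    fix z assume z: "z \<in> U"
    obtain p q where zz: "z = (p, q)" by (cases z)
    have q: "q < 1/2" using U_q[OF z b] zz by simp
    have hp: "\<bar>p\<bar> < pi/2" and he: "(cos p)^2 * (2 * q - 1) < cc * (1 - q)^2"
      using z zz unfolding U_def by auto
    have "(cos p)^2 \<le> 1" by (simp add: abs_square_le_1)
    then have "(cos p)^2 * (2 * q - 1) \<ge> 1 * (2 * q - 1)" using q
      by (intro mult_right_mono_neg) auto
    then have "2 * q - 1 < - m * (1 - q)^2" using he unfolding m_def by simp
    then have "m * (1 - q)^2 < 2 * (1 - q) - 1" by simp
    then have h: "m * (1 - q) * (1 - q) < 2 * (1 - q)" by (simp add: power2_eq_square)
    have pos: "1 - q > 0" using q by simp
    have "m * (1 - q) < 2" using mult_less_cancel_right_pos[OF pos] h by blast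
    then have "1 - q < 2 / m" using m by (simp add: field_simps)
    then show "z \<in> {-(pi/2)..pi/2} \<times> {1 - 2 / m .. 1/2}" using zz q hp by (auto simp: abs_less_iff)
  qed
  moreover have "bounded ({-(pi/2)..pi/2} \<times> {1 - 2 / m .. 1/2})"
    by (intro bounded_Times bounded_closed_interval)
  ultimately show ?thesis using bounded_subset by blast
qed

definition "V = {z. \<bar>fst z\<bar> \<le> pi/2} \<inter> {z. (cos (fst z))^2 * (2 * snd z - 1) \<le> cc * (1 - snd z)^2}
   \<inter> {z. snd z \<le> 1/2}"

lemma V_closed: "closed V"
  unfolding V_def
  by (intro closed_Int closed_Collect_le) (auto intro!: continuous_intros)

lemma frontier_U: assumes b: "b < 1/2" shows "frontier U \<subseteq> Ov"
proof
  fix z assume z: "z \<in> frontier U"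
  have "U \<subseteq> V"
  proof
    fix y assume y: "y \<in> U"
    have "snd y < 1/2" by (rule U_q[OF y b])
    then show "y \<in> V" using y unfolding U_def V_def by auto
  qed
  then have "closure U \<subseteq> V" using V_closed closure_minimal by blast
  moreover have "z \<in> closure U" "z \<notin> U" using z U_open
    by (auto simp: frontier_def interior_open)
  ultimately have zV: "z \<in> V" and zU: "z \<notin> U" by auto
  obtain p q where zz: "z = (p, q)" by (cases z)
  have hp: "\<bar>p\<bar> \<le> pi/2" and he: "(cos p)^2 * (2 * q - 1) \<le> cc * (1 - q)^2" and hq: "q \<le> 1/2"
    using zV zz unfolding V_def by auto
  have ccn: "cc < 0" by (rule cc_neg[OF b])
  have p: "\<bar>p\<bar> < pi/2"
  proof (rule ccontr)
    assume "\<not> \<bar>p\<bar> < pi/2"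
    then have "p = pi/2 \<or> p = -(pi/2)" using hp by auto
    then have "cos p = 0" by (metis cos_pi_half cos_minus)
    then have "0 \<le> cc * (1 - q)^2" using he by simp
    moreover have "q \<noteq> 1 \<Longrightarrow> cc * (1 - q)^2 < 0" using ccn by (intro mult_neg_pos) auto
    ultimately have "q = 1" by linarith
    then show False using hq by simp
  qed
  have eq: "(cos p)^2 * (2 * q - 1) = cc * (1 - q)^2"
    using zU p he zz unfolding U_def by auto
  have "q \<noteq> 1/2"
  proof
    assume q2: "q = 1/2"
    have "cc * (1/2)^2 = 0" using eq unfolding q2 by simp
    then show False using ccn by simp
  qed
  then show "z \<in> Ov" unfolding Ov_def using zz p eq hq by simp
qed

lemma inside_orbit: assumes b: "b < 1/2" shows "(0, 0) \<in> inside (phase_orbit x)"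
proof -
  have O: "phase_orbit x = Ov" by (rule orbit_eq[OF b])
  have nO: "(0::real, 0::real) \<notin> Ov"
  proof
    assume "(0::real, 0::real) \<in> Ov"
    then have "cc = -1" unfolding Ov_def by simp
    then show False using cc_gt by simp
  qed
  have inU: "(0::real, 0::real) \<in> U" unfolding U_def using cc_gt by simp
  define C where "C = connected_component_set (- Ov) (0::real, 0::real)"
  have C0: "(0, 0) \<in> C" unfolding C_def using nO by (simp add: connected_component_refl)
  have Csub: "C \<subseteq> - Ov" unfolding C_def by (rule connected_component_subset)
  have "C \<subseteq> U"
  proof (rule ccontr)
    assume "\<not> C \<subseteq> U"
    then have "C - U \<noteq> {}" by blast
    moreover have "C \<inter> U \<noteq> {}" using C0 inU by blast
    moreover have "connected C" unfolding C_def by simp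
    ultimately have "C \<inter> frontier U \<noteq> {}" using connected_Int_frontier by blast
    then show False using frontier_U[OF b] Csub by blast
  qed
  then have "bounded C" using U_bounded[OF b] bounded_subset by blast
  then show ?thesis unfolding O inside_def C_def using nO by simp
qed

lemma orbit_sym: assumes b: "b < 1/2" and "(p, q) \<in> phase_orbit x" shows "(- p, q) \<in> phase_orbit x"
  using assms(2) unfolding orbit_eq[OF b] Ov_def by simp

end

context L begin

lemma root_iff: "M t = 0 \<longleftrightarrow> B * cos t - A * sin t = 2 * (b - 1)"
  unfolding M_def by auto

lemma N_root: "M t = 0 \<Longrightarrow> N t \<noteq> 0"
  using D_pos[of t] unfolding DMN by auto

lemma sign_change:
  assumes "M t = 0"
  shows "\<exists>\<epsilon>>0. \<forall>s\<in>{t - \<epsilon><..<t}. \<forall>u\<in>{t<..<t + \<epsilon>}. M s * M u < 0"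
proof -
  have Nn: "N t \<noteq> 0" by (rule N_root[OF assms])
  show ?thesis
  proof (cases "- N t > 0")
    case True
    obtain d1 where d1: "d1 > 0" "\<forall>h>0. h < d1 \<longrightarrow> M t < M (t + h)"
      using DERIV_pos_inc_right[OF DERIV_M True] by blast
    obtain d2 where d2: "d2 > 0" "\<forall>h>0. h < d2 \<longrightarrow> M (t - h) < M t"
      using DERIV_pos_inc_left[OF DERIV_M True] by blast
    show ?thesis
    proof (intro exI[of _ "min d1 d2"] conjI ballI)
      show "min d1 d2 > 0" using d1 d2 by simp
      fix s u assume s: "s \<in> {t - min d1 d2<..<t}" and u: "u \<in> {t<..<t + min d1 d2}"
      have "t - s > 0" "t - s < d2" "u - t > 0" "u - t < d1" using s u by auto
      then have "M (t - (t - s)) < M t" "M t < M (t + (u - t))" using d1(2) d2(2) by blast+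
      then have "M s < 0" "M u > 0" using assms by auto
      then show "M s * M u < 0" by (simp add: mult_neg_pos)
    qed
  next
    case False
    then have Fn: "- N t < 0" using Nn by simp
    obtain d1 where d1: "d1 > 0" "\<forall>h>0. h < d1 \<longrightarrow> M t > M (t + h)"
      using DERIV_neg_dec_right[OF DERIV_M Fn] by blast
    obtain d2 where d2: "d2 > 0" "\<forall>h>0. h < d2 \<longrightarrow> M t < M (t - h)"
      using DERIV_neg_dec_left[OF DERIV_M Fn] by blast
    show ?thesis
    proof (intro exI[of _ "min d1 d2"] conjI ballI)
      show "min d1 d2 > 0" using d1 d2 by simp
      fix s u assume s: "s \<in> {t - min d1 d2<..<t}" and u: "u \<in> {t<..<t + min d1 d2}"
      have "t - s > 0" "t - s < d2" "u - t > 0" "u - t < d1" using s u by auto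
      then have "M t < M (t - (t - s))" "M t > M (t + (u - t))" using d1(2) d2(2) by blast+
      then have "M s > 0" "M u < 0" using assms by auto
      then show "M s * M u < 0" by (simp add: mult_pos_neg)
    qed
  qed
qed

lemma eventually_M_ne:
  assumes "M t = 0"
  shows "eventually (\<lambda>s. M s \<noteq> 0) (at t)"
proof -
  obtain e where e: "e > 0" "\<forall>s\<in>{t - e<..<t}. \<forall>u\<in>{t<..<t + e}. M s * M u < 0"
    using sign_change[OF assms] by blast
  show ?thesis unfolding eventually_at
  proof (intro exI[of _ e] conjI ballI impI)
    show "e > 0" by (rule e(1))
    fix s :: real assume "s \<in> UNIV" and h: "s \<noteq> t \<and> dist s t < e"
    show "M s \<noteq> 0"
    proof (cases "s < t")
      case True
      then have "s \<in> {t - e<..<t}" using h by (auto simp: dist_real_def)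
      then have "M s * M (t + e/2) < 0" using e by auto
      then show ?thesis by auto
    next
      case False
      then have "s \<in> {t<..<t + e}" using h by (auto simp: dist_real_def)
      then have "M (t - e/2) * M s < 0" using e by auto
      then show ?thesis by auto
    qed
  qed
qed

lemma residual_zero: "M s \<noteq> 0 \<Longrightarrow> ode_residual x s = 0"
  unfolding ode_residual_def using ode2[of s] by simp

lemma lim_residual: "M t = 0 \<Longrightarrow> (ode_residual x \<longlongrightarrow> 0) (at t)"
proof -
  assume "M t = 0"
  have "eventually (\<lambda>s. 0 = ode_residual x s) (at t)"
    using eventually_M_ne[OF \<open>M t = 0\<close>] by eventually_elim (simp add: residual_zero)
  then show ?thesis by (rule Lim_transform_eventually[OF tendsto_const])
qed

lemma lim_energy: "M t = 0 \<Longrightarrow> (energy x \<longlongrightarrow> cc) (at t)"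
proof -
  assume "M t = 0"
  have "eventually (\<lambda>s. cc = energy x s) (at t)"
    using eventually_M_ne[OF \<open>M t = 0\<close>] by eventually_elim (simp add: energy_eq)
  then show ?thesis by (rule Lim_transform_eventually[OF tendsto_const])
qed

lemma root_x: "M t = 0 \<Longrightarrow> (\<exists>k :: int. x t = (2 * of_int k + 1) * pi / 2) \<and> deriv x t = 1"
proof -
  assume Mt: "M t = 0"
  have "cos (x t) = 0" using cos_x_zero_iff Mt by simp
  then obtain i where i: "odd i" "x t = of_int i * (pi/2)" by (auto simp: cos_zero_iff_int)
  then obtain k where k: "i = 2 * k + 1" by (auto elim: oddE)
  have "x t = (2 * of_int k + 1) * pi / 2" using i(2) unfolding k by simp
  moreover have "deriv x t = 1" unfolding deriv_x using g_one_iff Mt by simp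
  ultimately show ?thesis by blast
qed

lemma sign_change_g:
  assumes "M t = 0"
  shows "\<exists>\<epsilon>>0. \<forall>s\<in>{t - \<epsilon><..<t}. \<forall>u\<in>{t<..<t + \<epsilon>}. (deriv x s - 1) * (deriv x u - 1) < 0"
proof -
  obtain e where e: "e > 0" "\<forall>s\<in>{t - e<..<t}. \<forall>u\<in>{t<..<t + e}. M s * M u < 0"
    using sign_change[OF assms] by blast
  show ?thesis
  proof (intro exI[of _ e] conjI ballI)
    show "e > 0" by (rule e(1))
    fix s u assume s: "s \<in> {t - e<..<t}" and u: "u \<in> {t<..<t + e}"
    have m: "M s * M u < 0" using e(2) s u by blast
    have gs: "deriv x s - 1 = - (2 * (1 - b) * M s / D s)" using one_minus_g[of s] by (simp add: deriv_x)
    have gu: "deriv x u - 1 = - (2 * (1 - b) * M u / D u)" using one_minus_g[of u] by (simp add: deriv_x)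
    have eq: "(deriv x s - 1) * (deriv x u - 1) = (4 * (1 - b)^2 / (D s * D u)) * (M s * M u)"
      unfolding gs gu by (simp add: power2_eq_square field_simps)
    have pos: "4 * (1 - b)^2 / (D s * D u) > 0" using hb2 D_pos[of s] D_pos[of u] by simp
    show "(deriv x s - 1) * (deriv x u - 1) < 0" unfolding eq by (rule mult_pos_neg[OF pos m])
  qed
qed

lemma strip_alg:
  fixes S s KK DD :: real
  assumes "S > 1" "s > 0" "KK = (S^2 * s^2 - s^2) / 2"
  shows "1/2 + KK / (S * s - s)^2 = S / (S - 1)" "1/2 + KK / (S * s + s)^2 = S / (S + 1)"
proof -
  have "(S * s - s)^2 = s^2 * (S - 1)^2" "(S * s + s)^2 = s^2 * (S + 1)^2"
    by (simp_all add: power2_eq_square algebra_simps)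
  moreover have "S^2 * s^2 - s^2 = s^2 * ((S - 1) * (S + 1))"
    by (simp add: power2_eq_square algebra_simps)
  moreover have "S - 1 \<noteq> 0" "S + 1 \<noteq> 0" "s \<noteq> 0" using assms by auto
  ultimately show "1/2 + KK / (S * s - s)^2 = S / (S - 1)" "1/2 + KK / (S * s + s)^2 = S / (S + 1)"
    unfolding assms(3) by (simp_all add: field_simps) (simp_all add: power2_eq_square algebra_simps)
qed

lemma strip:
  assumes b: "b > 1/2"
  shows "sqrt (1 + cc) / (sqrt (1 + cc) + 1) \<le> deriv x t \<and> deriv x t \<le> sqrt (1 + cc) / (sqrt (1 + cc) - 1)"
proof -
  define s where "s = 2 * \<bar>1 - b\<bar>"
  define S where "S = sqrt (1 + cc)"
  have sp: "s > 0" using hb2 by (simp add: s_def)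
  have s2: "s^2 = 4 * (1 - b)^2" unfolding s_def by (simp add: power2_eq_square)
  have Kp: "K > 0" by (rule K_pos[OF b])
  have c1: "1 + cc = (A^2 + B^2) / s^2"
    unfolding s2 RR cc_K using hb2 by (simp add: field_simps)
  have S1: "S > 1" unfolding S_def using cc_pos[OF b] by simp
  have SS: "S^2 = 1 + cc" unfolding S_def using cc_gt by simp
  have R: "A^2 + B^2 = S^2 * s^2" using c1 SS sp by (simp add: field_simps)
  have Kf: "K = (S^2 * s^2 - s^2) / 2" using RR R s2 by simp
  have Eb: "\<bar>E t\<bar> \<le> S * s"
  proof -
    have "(E t)^2 \<le> (S * s)^2" using E_sq_le[of t] R by (simp add: power_mult_distrib)
    then have "\<bar>E t\<bar> \<le> \<bar>S * s\<bar>" by (simp only: abs_le_square_iff)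
    moreover have "\<bar>S * s\<bar> = S * s" using S1 sp by simp
    ultimately show ?thesis by simp
  qed
  have Dt: "D t = S^2 * s^2 + 4 * (1 - b) * E t + s^2"
    using R s2 unfolding D_def E_def by simp
  have ue: "\<bar>4 * (1 - b) * E t\<bar> \<le> 2 * s * (S * s)"
  proof -
    have "\<bar>4 * (1 - b) * E t\<bar> = 2 * s * \<bar>E t\<bar>" unfolding s_def by (simp only: abs_mult)
    also have "\<dots> \<le> 2 * s * (S * s)" using Eb sp by simp
    finally show ?thesis .
  qed
  have Dlo: "(S * s - s)^2 \<le> D t"
  proof -
    have "(S * s - s)^2 = S^2 * s^2 - 2 * s * (S * s) + s^2" by (simp add: power2_eq_square algebra_simps)
    then show ?thesis unfolding Dt using ue by linarith
  qed
  have Dhi: "D t \<le> (S * s + s)^2"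
  proof -
    have "(S * s + s)^2 = S^2 * s^2 + 2 * s * (S * s) + s^2" by (simp add: power2_eq_square algebra_simps)
    then show ?thesis unfolding Dt using ue by linarith
  qed
  have hi_pos: "(S * s + s)^2 > 0" using Dhi D_pos[of t] by linarith
  have lo_pos: "(S * s - s)^2 > 0" using S1 sp by simp
  have "K / D t \<le> K / (S * s - s)^2"
    using Kp Dlo lo_pos D_pos[of t] by (intro divide_left_mono) (auto intro: mult_pos_pos)
  moreover have "K / (S * s + s)^2 \<le> K / D t"
    using Kp Dhi D_pos[of t] hi_pos by (intro divide_left_mono) (auto intro!: mult_pos_pos)
  ultimately have "1/2 + K / (S * s + s)^2 \<le> g t" "g t \<le> 1/2 + K / (S * s - s)^2"
    unfolding g_def by auto
  then show ?thesis unfolding deriv_x S_def[symmetric] strip_alg[OF S1 sp Kf] by simp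
qed

end

context L begin

lemma main_loc: "\<exists>x :: real \<Rightarrow> real.
     smooth_real x \<and> x 0 = a \<and> deriv x 0 = b
   \<and> (\<forall>t. 2 * (1 - b) + (2 * b - 1 + cos (2 * a)) * cos t - (sin (2 * a)) * sin t \<noteq> 0 \<longrightarrow>
          tan (x t) = ((sin (2 * a)) * cos t + (2 * b - 1 + cos (2 * a)) * sin t) / (2 * (1 - b) + (2 * b - 1 + cos (2 * a)) * cos t - (sin (2 * a)) * sin t))
   \<and> (\<forall>t. deriv x t = 1 / 2 + 2 * (2 * b - 1) * (cos a)^2 /
          ((sin (2 * a))^2 + (2 * b - 1 + cos (2 * a))^2 + 4 * (1 - b) * ((2 * b - 1 + cos (2 * a)) * cos t - (sin (2 * a)) * sin t) + 4 * (1 - b)^2))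
   \<and> (\<forall>t. cos (x t) \<noteq> 0 \<and> deriv x t \<noteq> 1 \<longrightarrow>
          ((\<lambda>s. cos (x s) / (1 - deriv x s)) has_real_derivative - sin (x t)) (at t)
        \<and> cos (x t) / (1 - deriv x t)^2 * deriv (deriv x) t
            - sin (x t) / (1 - deriv x t) * deriv x t = - sin (x t))
   \<and> (periodic_real x \<longleftrightarrow> b < 1 / 2)
   \<and> (b < 1 / 2 \<longrightarrow>
        (0, 0) \<in> inside (phase_orbit x)
      \<and> (\<forall>p q. (p, q) \<in> phase_orbit x \<longrightarrow> (- p, q) \<in> phase_orbit x))
   \<and> (b > 1 / 2 \<longrightarrow>
        (\<forall>\<tau> :: int \<Rightarrow> real.
           strict_mono \<tau>
         \<and> range \<tau> = {t. (2 * b - 1 + cos (2 * a)) * cos t - (sin (2 * a)) * sin t = 2 * (b - 1)}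
         \<and> \<tau> 0 > 0 \<and> (\<forall>t. (2 * b - 1 + cos (2 * a)) * cos t - (sin (2 * a)) * sin t = 2 * (b - 1) \<and> t > 0 \<longrightarrow> \<tau> 0 \<le> t)
         \<longrightarrow>
           (\<forall>j. (\<exists>k :: int. x (\<tau> j) = (2 * of_int k + 1) * pi / 2) \<and> deriv x (\<tau> j) = 1)
         \<and> (\<forall>j. (ode_residual x \<longlongrightarrow> 0) (at (\<tau> j))
                 \<and> (energy x \<longlongrightarrow> ((2 * b - 1) * (cos a)^2 / (1 - b)^2)) (at (\<tau> j)))
         \<and> (\<forall>t. sqrt (1 + ((2 * b - 1) * (cos a)^2 / (1 - b)^2)) / (sqrt (1 + ((2 * b - 1) * (cos a)^2 / (1 - b)^2)) + 1) \<le> deriv x t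
                 \<and> deriv x t \<le> sqrt (1 + ((2 * b - 1) * (cos a)^2 / (1 - b)^2)) / (sqrt (1 + ((2 * b - 1) * (cos a)^2 / (1 - b)^2)) - 1))
         \<and> {t. deriv x t = 1} = range \<tau>
         \<and> (\<forall>j. \<exists>\<epsilon>>0. \<forall>s\<in>{\<tau> j - \<epsilon><..<\<tau> j}. \<forall>u\<in>{\<tau> j<..<\<tau> j + \<epsilon>}.
                 (deriv x s - 1) * (deriv x u - 1) < 0)))"
proof -
  have P1: "smooth_real x" by (rule smooth_x)
  have P2: "x 0 = a" by (rule x0)
  have P3: "deriv x 0 = b" unfolding deriv_x by (rule g0)
  have P4: "\<forall>t. 2 * (1 - b) + B * cos t - A * sin t \<noteq> 0 \<longrightarrow>
          tan (x t) = (A * cos t + B * sin t) / (2 * (1 - b) + B * cos t - A * sin t)"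
    using tan_x unfolding M_def N_def by blast
  have P5: "\<forall>t. deriv x t = 1 / 2 + 2 * (2 * b - 1) * (cos a)^2 /
          (A^2 + B^2 + 4 * (1 - b) * (B * cos t - A * sin t) + 4 * (1 - b)^2)"
    unfolding deriv_x g_def K_def D_def by simp
  have P6: "\<forall>t. cos (x t) \<noteq> 0 \<and> deriv x t \<noteq> 1 \<longrightarrow>
          ((\<lambda>s. cos (x s) / (1 - deriv x s)) has_real_derivative - sin (x t)) (at t)
        \<and> cos (x t) / (1 - deriv x t)^2 * deriv (deriv x) t
            - sin (x t) / (1 - deriv x t) * deriv x t = - sin (x t)"
  proof (intro allI impI)
    fix t assume "cos (x t) \<noteq> 0 \<and> deriv x t \<noteq> 1"
    then have Mt: "M t \<noteq> 0" using cos_x_zero_iff by simp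
    show "((\<lambda>s. cos (x s) / (1 - deriv x s)) has_real_derivative - sin (x t)) (at t)
        \<and> cos (x t) / (1 - deriv x t)^2 * deriv (deriv x) t
            - sin (x t) / (1 - deriv x t) * deriv x t = - sin (x t)"
      using ode1[OF Mt] ode2[OF Mt] by blast
  qed
  have P7: "periodic_real x \<longleftrightarrow> b < 1 / 2" by (rule periodic_iff)
  have P8: "b < 1 / 2 \<longrightarrow>
        (0, 0) \<in> inside (phase_orbit x)
      \<and> (\<forall>p q. (p, q) \<in> phase_orbit x \<longrightarrow> (- p, q) \<in> phase_orbit x)"
    using inside_orbit orbit_sym by blast
  have P9: "b > 1 / 2 \<longrightarrow>
        (\<forall>\<tau> :: int \<Rightarrow> real.
           strict_mono \<tau>
         \<and> range \<tau> = {t. B * cos t - A * sin t = 2 * (b - 1)}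
         \<and> \<tau> 0 > 0 \<and> (\<forall>t. B * cos t - A * sin t = 2 * (b - 1) \<and> t > 0 \<longrightarrow> \<tau> 0 \<le> t)
         \<longrightarrow>
           (\<forall>j. (\<exists>k :: int. x (\<tau> j) = (2 * of_int k + 1) * pi / 2) \<and> deriv x (\<tau> j) = 1)
         \<and> (\<forall>j. (ode_residual x \<longlongrightarrow> 0) (at (\<tau> j))
                 \<and> (energy x \<longlongrightarrow> cc) (at (\<tau> j)))
         \<and> (\<forall>t. sqrt (1 + cc) / (sqrt (1 + cc) + 1) \<le> deriv x t
                 \<and> deriv x t \<le> sqrt (1 + cc) / (sqrt (1 + cc) - 1))
         \<and> {t. deriv x t = 1} = range \<tau>
         \<and> (\<forall>j. \<exists>\<epsilon>>0. \<forall>s\<in>{\<tau> j - \<epsilon><..<\<tau> j}. \<forall>u\<in>{\<tau> j<..<\<tau> j + \<epsilon>}.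
                 (deriv x s - 1) * (deriv x u - 1) < 0))"
  proof (intro impI allI)
    fix \<tau> :: "int \<Rightarrow> real"
    assume b: "b > 1/2"
    assume H: "strict_mono \<tau>
         \<and> range \<tau> = {t. B * cos t - A * sin t = 2 * (b - 1)}
         \<and> \<tau> 0 > 0 \<and> (\<forall>t. B * cos t - A * sin t = 2 * (b - 1) \<and> t > 0 \<longrightarrow> \<tau> 0 \<le> t)"
    then have rng: "range \<tau> = {t. M t = 0}" using root_iff by auto
    have R: "M (\<tau> j) = 0" for j using rng by auto
    have Q1: "\<forall>j. (\<exists>k :: int. x (\<tau> j) = (2 * of_int k + 1) * pi / 2) \<and> deriv x (\<tau> j) = 1"
      using root_x[OF R] by blast
    have Q2: "\<forall>j. (ode_residual x \<longlongrightarrow> 0) (at (\<tau> j)) \<and> (energy x \<longlongrightarrow> cc) (at (\<tau> j))"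
      using lim_residual[OF R] lim_energy[OF R] by blast
    have Q3: "\<forall>t. sqrt (1 + cc) / (sqrt (1 + cc) + 1) \<le> deriv x t
                 \<and> deriv x t \<le> sqrt (1 + cc) / (sqrt (1 + cc) - 1)"
      using strip[OF b] by blast
    have Q4: "{t. deriv x t = 1} = range \<tau>" unfolding rng deriv_x using g_one_iff by auto
    have Q5: "\<forall>j. \<exists>\<epsilon>>0. \<forall>s\<in>{\<tau> j - \<epsilon><..<\<tau> j}. \<forall>u\<in>{\<tau> j<..<\<tau> j + \<epsilon>}.
                 (deriv x s - 1) * (deriv x u - 1) < 0"
      using sign_change_g[OF R] by blast
    show "(\<forall>j. (\<exists>k :: int. x (\<tau> j) = (2 * of_int k + 1) * pi / 2) \<and> deriv x (\<tau> j) = 1)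
         \<and> (\<forall>j. (ode_residual x \<longlongrightarrow> 0) (at (\<tau> j))
                 \<and> (energy x \<longlongrightarrow> cc) (at (\<tau> j)))
         \<and> (\<forall>t. sqrt (1 + cc) / (sqrt (1 + cc) + 1) \<le> deriv x t
                 \<and> deriv x t \<le> sqrt (1 + cc) / (sqrt (1 + cc) - 1))
         \<and> {t. deriv x t = 1} = range \<tau>
         \<and> (\<forall>j. \<exists>\<epsilon>>0. \<forall>s\<in>{\<tau> j - \<epsilon><..<\<tau> j}. \<forall>u\<in>{\<tau> j<..<\<tau> j + \<epsilon>}.
                 (deriv x s - 1) * (deriv x u - 1) < 0)"
      using Q1 Q2 Q3 Q4 Q5 by blast
  qed
  show ?thesis
    by (rule exI[of _ x]) (intro conjI P1 P2 P3 P4[unfolded A_def B_def] P5[unfolded A_def B_def] P6 P7 P8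
       P9[unfolded A_def B_def cc_def])
qed

end

theorem mainTheorem1:
  fixes a b :: real
  assumes ha: "\<bar>a\<bar> < pi / 2" and hb1: "b \<noteq> 1 / 2" and hb2: "b \<noteq> 1"
    and hab: "\<bar>a\<bar> + \<bar>b\<bar> > 0"
  defines "c \<equiv> (2 * b - 1) * (cos a)^2 / (1 - b)^2"
    and "A \<equiv> sin (2 * a)"
    and "B \<equiv> 2 * b - 1 + cos (2 * a)"
  shows "\<exists>x :: real \<Rightarrow> real.
     smooth_real x \<and> x 0 = a \<and> deriv x 0 = b
   \<and> (\<forall>t. 2 * (1 - b) + B * cos t - A * sin t \<noteq> 0 \<longrightarrow>
          tan (x t) = (A * cos t + B * sin t) / (2 * (1 - b) + B * cos t - A * sin t))
   \<and> (\<forall>t. deriv x t = 1 / 2 + 2 * (2 * b - 1) * (cos a)^2 /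
          (A^2 + B^2 + 4 * (1 - b) * (B * cos t - A * sin t) + 4 * (1 - b)^2))
   \<and> (\<forall>t. cos (x t) \<noteq> 0 \<and> deriv x t \<noteq> 1 \<longrightarrow>
          ((\<lambda>s. cos (x s) / (1 - deriv x s)) has_real_derivative - sin (x t)) (at t)
        \<and> cos (x t) / (1 - deriv x t)^2 * deriv (deriv x) t
            - sin (x t) / (1 - deriv x t) * deriv x t = - sin (x t))
   \<and> (periodic_real x \<longleftrightarrow> b < 1 / 2)
   \<and> (b < 1 / 2 \<longrightarrow>
        (0, 0) \<in> inside (phase_orbit x)
      \<and> (\<forall>p q. (p, q) \<in> phase_orbit x \<longrightarrow> (- p, q) \<in> phase_orbit x))
   \<and> (b > 1 / 2 \<longrightarrow>
        (\<forall>\<tau> :: int \<Rightarrow> real.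
           strict_mono \<tau>
         \<and> range \<tau> = {t. B * cos t - A * sin t = 2 * (b - 1)}
         \<and> \<tau> 0 > 0 \<and> (\<forall>t. B * cos t - A * sin t = 2 * (b - 1) \<and> t > 0 \<longrightarrow> \<tau> 0 \<le> t)
         \<longrightarrow>
           (\<forall>j. (\<exists>k :: int. x (\<tau> j) = (2 * of_int k + 1) * pi / 2) \<and> deriv x (\<tau> j) = 1)
         \<and> (\<forall>j. (ode_residual x \<longlongrightarrow> 0) (at (\<tau> j))
                 \<and> (energy x \<longlongrightarrow> c) (at (\<tau> j)))
         \<and> (\<forall>t. sqrt (1 + c) / (sqrt (1 + c) + 1) \<le> deriv x t
                 \<and> deriv x t \<le> sqrt (1 + c) / (sqrt (1 + c) - 1))
         \<and> {t. deriv x t = 1} = range \<tau>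
         \<and> (\<forall>j. \<exists>\<epsilon>>0. \<forall>s\<in>{\<tau> j - \<epsilon><..<\<tau> j}. \<forall>u\<in>{\<tau> j<..<\<tau> j + \<epsilon>}.
                 (deriv x s - 1) * (deriv x u - 1) < 0)))"
proof -
  interpret I: L a b using ha hb1 hb2 hab by unfold_locales
  show ?thesis unfolding c_def A_def B_def by (rule I.main_loc)
qed

end
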